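(* Let $L$ be a finite lattice, let $b\in L$, and let $A\subseteq L$ be a $b$-meet antichain. Let $L_A^b=\{\bigwedge A'\wedge b : A'\subseteq A\}$, regarded as a subposet of $L$ (it is a lattice), and let $\mu_A^b$ be the Möbius function of the lattice $L_A^b$. Then for every $\varphi\in R(L)$, $$\nabla_A^b\varphi=\sum_{x\in L_A^b}\varphi(x)\,\mu_A^b(x,b).$$
   Context: $L$ is a finite lattice with order $\le$, meet $\wedge$, minimum $\hat0$ and maximum $\hat1$; $R(L)$ is the space of real-valued functions on $L$. For $A'\subseteq L$, $\bigwedge A'$ is the meet of the elements of $A'$, with $\bigwedge\emptyset=\hat1$. For a finite subset $A\subseteq L$ and $b\in L$, the successive difference functional is $\nabla_A^b\varphi=\sum_{A'\subseteq A}(-1)^{|A'|}\varphi(\bigwedge A'\wedge b)$; for nonempty $A=\{a_1,\dots,a_n\}$ this equals $\nabla_{a_1,\ldots,a_n}\varphi(b)$, where $\nabla_a\varphi(x)=\varphi(x)-\varphi(x\wedge a)$ and $\nabla_{a_1,\ldots,a_n}\varphi=\nabla_{a_n}(\nabla_{a_1,\ldots,a_{n-1}}\varphi)$. An $n$-element subset $A=\{a_1,\dots,a_n\}$ of $L$ is a $b$-meet antichain if $\{a_1\wedge b,\dots,a_n\wedge b\}$ is an $n$-element antichain (pairwise incomparable distinct elements); a singleton $\{a\}$ counts as a $b$-meet antichain only when $b\not\le a$. The Möbius function $\mu$ of a finite poset $P$ is defined by $\mu(x,x)=1$ and $\mu(x,y)=-\sum_{x\le z<y}\mu(x,z)$ for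 $x<y$. *)

theory Defs
  imports Complex_Main
begin

text \<open>A finite lattice L is modelled by a type of class finite and complete_lattice
(every finite nonempty lattice is complete, with minimum bot and maximum top;
Inf of the empty set is top).\<close>

definition meet_set :: "'a::complete_lattice set \<Rightarrow> 'a \<Rightarrow> 'a" where
  "meet_set A' b = inf (Inf A') b"

definition nabla :: "'a::complete_lattice set \<Rightarrow> 'a \<Rightarrow> ('a \<Rightarrow> real) \<Rightarrow> real" where
  "nabla A b \<phi> = (\<Sum>A'\<in>Pow A. (-1) ^ card A' * \<phi> (meet_set A' b))"

definition b_meet_antichain :: "'a::lattice \<Rightarrow> 'a set \<Rightarrow> bool" where
  "b_meet_antichain b A \<longleftrightarrow> finite A \<and>
     inj_on (\<lambda>a. inf a b) A \<and>
     (\<forall>a\<in>A. \<forall>a'\<in>A. a \<noteq> a' \<longrightarrow> \<not> (inf a b \<le> inf a' b)) \<and>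
     (card A = 1 \<longrightarrow> (\<forall>a\<in>A. \<not> b \<le> a))"

definition LAb :: "'a::complete_lattice set \<Rightarrow> 'a \<Rightarrow> 'a set" where
  "LAb A b = {meet_set A' b | A'. A' \<subseteq> A}"

function mobius :: "'a::{order,finite} set \<Rightarrow> 'a \<Rightarrow> 'a \<Rightarrow> int" where
  "mobius P x y =
     (if x = y then 1
      else if x < y then - (\<Sum>z\<in>{z\<in>P. x \<le> z \<and> z < y}. mobius P x z)
      else 0)"
  by auto
termination
proof (relation "measure (\<lambda>(P, x, y). card {z\<in>P. x \<le> z \<and> z < y})")
  show "wf (measure (\<lambda>(P, x, y). card {z\<in>P. x \<le> z \<and> z < y}))" by simp
next
  fix P :: "'a set" and x y z :: 'a
  assume "z \<in> {z\<in>P. x \<le> z \<and> z < y}"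
  hence zP: "z \<in> P" "x \<le> z" "z < y" by auto
  have "{w\<in>P. x \<le> w \<and> w < z} \<subset> {w\<in>P. x \<le> w \<and> w < y}"
    using zP by auto
  hence "card {w\<in>P. x \<le> w \<and> w < z} < card {w\<in>P. x \<le> w \<and> w < y}"
    by (intro psubset_card_mono) auto
  thus "((P, x, z), P, x, y) \<in> measure (\<lambda>(P, x, y). card {z\<in>P. x \<le> z \<and> z < y})"
    by simp
qed

declare mobius.simps[simp del]

end

theory Submission
  imports Defs
begin

lemma mob_zero: "\<not> x \<le> z \<Longrightarrow> mobius P x z = 0"
  by (subst mobius.simps) auto

lemma mob_sum:
  fixes P :: "'a::{finite,order} set"
  assumes xP: "x \<in> P" and yP: "y \<in> P"
  shows "(\<Sum>z\<in>P. if z \<le> y then real_of_int (mobius P x z) else 0) = (if x = y then 1 else 0)"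
proof -
  have fin: "finite P" by simp
  have "(\<Sum>z\<in>P. if z \<le> y then real_of_int (mobius P x z) else 0)
      = (\<Sum>z\<in>{z\<in>P. x \<le> z \<and> z \<le> y}. real_of_int (mobius P x z))"
    by (rule sum.mono_neutral_cong_right) (auto, metis mob_zero)
  also have "\<dots> = (if x = y then 1 else 0)"
  proof (cases "x = y")
    case True
    then have "{z\<in>P. x \<le> z \<and> z \<le> y} = {x}" using xP by auto
    then show ?thesis using True by (simp add: mobius.simps)
  next
    case False
    show ?thesis
    proof (cases "x \<le> y")
      case True
      with False have lt: "x < y" by simp
      have eq: "{z\<in>P. x \<le> z \<and> z \<le> y} = insert y {z\<in>P. x \<le> z \<and> z < y}"
        using yP lt by auto
      have "(\<Sum>z\<in>{z\<in>P. x \<le> z \<and> z \<le> y}. real_of_int (mobius P x z))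
          = real_of_int (mobius P x y) + (\<Sum>z\<in>{z\<in>P. x \<le> z \<and> z < y}. real_of_int (mobius P x z))"
        unfolding eq by (subst sum.insert) auto
      also have "\<dots> = 0"
        using lt False by (subst mobius.simps[of P x y]) (simp add: of_int_sum)
      finally show ?thesis using False by simp
    next
      case False
      then have E: "{z\<in>P. x \<le> z \<and> z \<le> y} = {}" using order_trans by blast
      show ?thesis unfolding E using \<open>x \<noteq> y\<close> by simp
    qed
  qed
  finally show ?thesis .
qed

lemma alt_sum:
  assumes "finite S"
  shows "(\<Sum>A'\<in>Pow S. (-1::real) ^ card A') = (if S = {} then 1 else 0)"
  using assms
proof (induction S rule: finite_induct)
  case empty
  then show ?case by simp
next
  case (insert a F)
  have inj: "inj_on (insert a) (Pow F)"
    using insert.hyps(2) unfolding inj_on_def by (metis PowD insert_ident subsetD)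
  have disj: "Pow F \<inter> insert a ` Pow F = {}" using insert.hyps(2) by auto
  have "(\<Sum>A'\<in>Pow (insert a F). (-1::real) ^ card A')
     = (\<Sum>A'\<in>Pow F. (-1::real) ^ card A') + (\<Sum>A'\<in>insert a ` Pow F. (-1::real) ^ card A')"
    unfolding Pow_insert using insert.hyps(1) disj by (subst sum.union_disjoint) auto
  also have "(\<Sum>A'\<in>insert a ` Pow F. (-1::real) ^ card A') = (\<Sum>A'\<in>Pow F. (-1::real) ^ card (insert a A'))"
    using inj by (simp add: sum.reindex)
  also have "\<dots> = - (\<Sum>A'\<in>Pow F. (-1::real) ^ card A')"
    by (subst sum_negf[symmetric], rule sum.cong) 
       (use insert.hyps in \<open>auto simp: card_insert_if finite_subset intro: finite_subset\<close>)
  finally show ?case by simp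
qed

theorem lemma2p2:
  fixes b :: "'a::{finite,complete_lattice}" and A :: "'a set" and \<phi> :: "'a \<Rightarrow> real"
  assumes "b_meet_antichain b A"
  shows "nabla A b \<phi> = (\<Sum>x\<in>LAb A b. \<phi> x * of_int (mobius (LAb A b) x b))"
proof -
  define P where "P = LAb A b"
  define m where "m = (\<lambda>A'. meet_set A' b)"
  define f where "f = (\<lambda>x. \<Sum>A'\<in>{A'\<in>Pow A. m A' = x}. (-1::real) ^ card A')"
  have finA: "finite A" using assms by (simp add: b_meet_antichain_def)
  have P_eq: "P = m ` Pow A" unfolding P_def m_def LAb_def by auto
  have le_b: "x \<le> b" if "x \<in> P" for x
    using that unfolding P_eq m_def meet_set_def by auto
  have bP: "b \<in> P" unfolding P_eq m_def meet_set_def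
    by (rule image_eqI[of _ _ "{}"]) auto
  have group: "(\<Sum>A'\<in>Pow A. (-1::real) ^ card A' * g (m A')) = (\<Sum>x\<in>P. g x * f x)" for g
  proof -
    have "(\<Sum>A'\<in>Pow A. (-1::real) ^ card A' * g (m A'))
       = (\<Sum>x\<in>m ` Pow A. \<Sum>A'\<in>{A'\<in>Pow A. m A' = x}. (-1::real) ^ card A' * g (m A'))"
      using finA by (intro sum.image_gen[where g=m]) simp
    also have "\<dots> = (\<Sum>x\<in>P. g x * f x)"
      unfolding P_eq f_def by (rule sum.cong) (auto simp: sum_distrib_left mult.commute intro!: sum.cong)
    finally show ?thesis .
  qed
  have key: "(\<Sum>w\<in>P. (if x \<le> w then 1 else 0) * f w) = (if x = b then 1 else 0)"
    if xP: "x \<in> P" for x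
  proof -
    define S where "S = {a\<in>A. x \<le> a}"
    have "(\<Sum>w\<in>P. (if x \<le> w then 1 else 0) * f w)
        = (\<Sum>A'\<in>Pow A. (-1::real) ^ card A' * (if x \<le> m A' then 1 else 0))"
      using group[of "\<lambda>w. if x \<le> w then 1 else 0"] by simp
    also have "\<dots> = (\<Sum>A'\<in>{A'\<in>Pow A. x \<le> m A'}. (-1::real) ^ card A')"
      using finA by (simp add: sum.inter_filter[symmetric] if_distrib cong: if_cong)
    also have "{A'\<in>Pow A. x \<le> m A'} = Pow S"
      using le_b[OF xP] unfolding S_def m_def meet_set_def by (auto simp: le_Inf_iff)
    also have "(\<Sum>A'\<in>Pow S. (-1::real) ^ card A') = (if S = {} then 1 else 0)"
      using finA by (intro alt_sum) (simp add: S_def)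
    also have "(S = {}) = (x = b)"
    proof
      assume "S = {}"
      obtain A' where A': "A' \<subseteq> A" "x = m A'" using xP unfolding P_eq by auto
      show "x = b"
      proof (cases "A' = {}")
        case True then show ?thesis using A' by (simp add: m_def meet_set_def)
      next
        case False
        then obtain a where "a \<in> A'" by auto
        then have "a \<in> S" using A' unfolding S_def m_def meet_set_def
          by (auto intro: le_infI1 Inf_lower)
        then show ?thesis using \<open>S = {}\<close> by simp
      qed
    next
      assume xb: "x = b"
      show "S = {}"
      proof (rule ccontr)
        assume "S \<noteq> {}"
        then obtain a where a: "a \<in> A" "b \<le> a" using xb unfolding S_def by auto
        show False
        proof (cases "card A = 1")
          case True
          then show False using assms a unfolding b_meet_antichain_def by auto
        next
          case False
          have "card A \<noteq> 0" using finA a by auto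
          with False have "card A \<ge> 2" by linarith
          have "card (A - {a}) \<ge> 1" using a finA \<open>card A \<ge> 2\<close> by (simp add: card_Diff_singleton)
          then have "A - {a} \<noteq> {}" by (metis card.empty not_one_le_zero)
          then obtain a' where a': "a' \<in> A" "a' \<noteq> a" by blast
          have "inf a' b \<le> inf a b" using a by (simp add: inf_absorb2)
          then show False using assms a a' unfolding b_meet_antichain_def by blast
        qed
      qed
    qed
    finally show ?thesis .
  qed
  have fmob: "f x = real_of_int (mobius P x b)" if xP: "x \<in> P" for x
  proof -
    have "(\<Sum>z\<in>P. real_of_int (mobius P x z) * (\<Sum>w\<in>P. (if z \<le> w then 1 else 0) * f w))
        = (\<Sum>z\<in>P. real_of_int (mobius P x z) * (if z = b then 1 else 0))"
      using key by (intro sum.cong) auto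
    also have "\<dots> = real_of_int (mobius P x b)"
      using bP by (simp add: if_distrib cong: if_cong)
    finally have 1: "(\<Sum>z\<in>P. real_of_int (mobius P x z) * (\<Sum>w\<in>P. (if z \<le> w then 1 else 0) * f w))
        = real_of_int (mobius P x b)" .
    have "(\<Sum>z\<in>P. real_of_int (mobius P x z) * (\<Sum>w\<in>P. (if z \<le> w then 1 else 0) * f w))
        = (\<Sum>w\<in>P. f w * (\<Sum>z\<in>P. if z \<le> w then real_of_int (mobius P x z) else 0))"
      unfolding sum_distrib_left
      apply (subst sum.swap)
      by (intro sum.cong) auto
    also have "\<dots> = (\<Sum>w\<in>P. f w * (if x = w then 1 else 0))"
      using xP by (intro sum.cong) (simp_all add: mob_sum)
    also have "\<dots> = f x" using xP by (simp add: if_distrib cong: if_cong)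
    finally show ?thesis using 1 by simp
  qed
  have "nabla A b \<phi> = (\<Sum>x\<in>P. \<phi> x * f x)"
    unfolding nabla_def using group[of \<phi>] by (simp add: m_def)
  also have "\<dots> = (\<Sum>x\<in>P. \<phi> x * of_int (mobius P x b))"
    using fmob by (intro sum.cong) auto
  finally show ?thesis unfolding P_def .
qed

end
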